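(* The image of $\phi\colon M\to\mathbb R^n\times\mathbb C^n$ is the set $K=\{(a,b)\in\mathbb R^n\times\mathbb C^n: a_k\geqslant|b_k|\ \text{for } k=1,\dots,d\}$. Moreover $\phi$ induces a finite-to-one surjection $\tilde\phi\colon M/\mathbb T^n\to K$, and the fibre of $\tilde\phi$ over $(a,b)\in K$ consists of exactly $2^m$ points, where $m$ is the number of indices $k$ with $a_k>|b_k|$.
   Context: Let $\mathbb C^{d,d}=\mathbb C^d\times\mathbb C^d$ with coordinates $(z,w)$, metric $g=\mathrm{Re}\sum_k(dz_k\,d\bar z_k-dw_k\,d\bar w_k)$, $I(z,w)=(iz,-iw)$, $S(z,w)=(w,z)$, $T=IS$, and forms $\omega_A(Y,Z)=g(Y,AZ)$. The torus $\mathbb T^d$ acts by $(z_k,w_k)\mapsto(e^{i\theta_k}z_k,e^{i\theta_k}w_k)$. Fix $u_1,\dots,u_d\in\mathbb Z^n$ spanning $\mathbb R^n$; let $\beta\colon\mathbb R^d\to\mathbb R^n$, $e_k\mapsto u_k$, $\mathfrak n=\ker\beta$ with inclusion $\iota$, and $N\subset\mathbb T^d$ the kernel of the induced homomorphism $\mathbb T^d\to\mathbb T^n$. Identify $\mathbb R^d$ with its dual by the standard inner product. Fix real constants $\lambda^{(j)}_k$ ($j=1,2,3$, $k=1,\dots,d$), put $\lambda^{(c)}_k=\lambda^{(2)}_k+i\lambda^{(3)}_k$, and let $\mu=(\mu_I,\mu_S,\mu_T)$ with $\mu_I(z,w)=\sum_k(\tfrac12(|z_k|^2+|w_k|^2)+\lambda^{(1)}_k)\iota^*e_k$,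 $(\mu_S+i\mu_T)(z,w)=\sum_k(iz_k\bar w_k+\lambda^{(c)}_k)\iota^*e_k$. Let $M=\mu^{-1}(0)/N$, with the residual action of $\mathbb T^n=\mathbb T^d/N$. For $(z,w)\in\mu^{-1}(0)$ there are unique $a\in\mathbb R^n$, $b\in\mathbb C^n$ with $\langle a,u_k\rangle=\tfrac12(|z_k|^2+|w_k|^2)+\lambda^{(1)}_k$ and $\langle b,u_k\rangle=iz_k\bar w_k+\lambda^{(c)}_k$ for all $k$ ($\langle\cdot,\cdot\rangle$ the standard inner product, extended complex-bilinearly); set $\phi([z,w])=(a,b)$. For $(a,b)\in\mathbb R^n\times\mathbb C^n$ write $a_k=\langle a,u_k\rangle-\lambda^{(1)}_k$, $b_k=\langle b,u_k\rangle-\lambda^{(c)}_k$. *)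

theory Defs
  imports "HOL-Analysis.Analysis"
begin

text \<open>Coordinates: C^d x C^d is complex^'d x complex^'d, R^n is real^'n, C^n is complex^'n,
  with d = CARD('d), n = CARD('n). The vectors u_k are u k :: real^'n.\<close>

definition cinner :: "complex^'n \<Rightarrow> real^'n \<Rightarrow> complex" where
  "cinner b v = (\<Sum>j\<in>UNIV. b$j * complex_of_real (v$j))"

definition lam_c :: "('d \<Rightarrow> real) \<Rightarrow> ('d \<Rightarrow> real) \<Rightarrow> 'd \<Rightarrow> complex" where
  "lam_c l2 l3 k = Complex (l2 k) (l3 k)"

text \<open>The Lie algebra n = ker beta of N, beta(e_k) = u_k.\<close>
definition nker :: "('d::finite \<Rightarrow> real^'n) \<Rightarrow> (real^'d) set" where
  "nker u = {x. (\<Sum>k\<in>UNIV. x$k *\<^sub>R u k) = 0}"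

text \<open>Components of mu (as functions of the coefficients of iota^* e_k).\<close>
definition muI_coeff :: "('d \<Rightarrow> real) \<Rightarrow> complex^'d \<Rightarrow> complex^'d \<Rightarrow> 'd \<Rightarrow> real" where
  "muI_coeff l1 z w k = (norm (z$k))\<^sup>2 / 2 + (norm (w$k))\<^sup>2 / 2 + l1 k"

definition muC_coeff :: "('d \<Rightarrow> real) \<Rightarrow> ('d \<Rightarrow> real) \<Rightarrow> complex^'d \<Rightarrow> complex^'d \<Rightarrow> 'd \<Rightarrow> complex" where
  "muC_coeff l2 l3 z w k = \<i> * z$k * cnj (w$k) + lam_c l2 l3 k"

text \<open>mu(z,w) = 0: the functionals sum_k c_k iota^* e_k vanish on n (for mu_I real, for
  mu_S + i mu_T complex-linearly extended).\<close>
definition level_set ::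
  "('d::finite \<Rightarrow> real^'n) \<Rightarrow> ('d \<Rightarrow> real) \<Rightarrow> ('d \<Rightarrow> real) \<Rightarrow> ('d \<Rightarrow> real)
    \<Rightarrow> ((complex^'d) \<times> (complex^'d)) set" where
  "level_set u l1 l2 l3 = {(z, w).
      (\<forall>x\<in>nker u. (\<Sum>k\<in>UNIV. muI_coeff l1 z w k * x$k) = 0) \<and>
      (\<forall>x\<in>nker u. (\<Sum>k\<in>UNIV. muC_coeff l2 l3 z w k * complex_of_real (x$k)) = 0)}"

text \<open>The map phi (defined on the level set, hence on M = level set / N).\<close>
definition phi ::
  "('d::finite \<Rightarrow> real^'n::finite) \<Rightarrow> ('d \<Rightarrow> real) \<Rightarrow> ('d \<Rightarrow> real) \<Rightarrow> ('d \<Rightarrow> real)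
    \<Rightarrow> (complex^'d) \<times> (complex^'d) \<Rightarrow> (real^'n) \<times> (complex^'n)" where
  "phi u l1 l2 l3 p = (THE (a, b).
      (\<forall>k. a \<bullet> u k = muI_coeff l1 (fst p) (snd p) k) \<and>
      (\<forall>k. cinner b (u k) = muC_coeff l2 l3 (fst p) (snd p) k))"

definition a_comp :: "('d \<Rightarrow> real^'n) \<Rightarrow> ('d \<Rightarrow> real) \<Rightarrow> real^'n \<Rightarrow> 'd \<Rightarrow> real" where
  "a_comp u l1 a k = a \<bullet> u k - l1 k"

definition b_comp :: "('d \<Rightarrow> real^'n::finite) \<Rightarrow> ('d \<Rightarrow> real) \<Rightarrow> ('d \<Rightarrow> real)
    \<Rightarrow> complex^'n \<Rightarrow> 'd \<Rightarrow> complex" where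
  "b_comp u l2 l3 b k = cinner b (u k) - lam_c l2 l3 k"

definition Kset :: "('d \<Rightarrow> real^'n::finite) \<Rightarrow> ('d \<Rightarrow> real) \<Rightarrow> ('d \<Rightarrow> real) \<Rightarrow> ('d \<Rightarrow> real)
    \<Rightarrow> ((real^'n) \<times> (complex^'n)) set" where
  "Kset u l1 l2 l3 = {(a, b). \<forall>k. a_comp u l1 a k \<ge> cmod (b_comp u l2 l3 b k)}"

definition torus_act :: "('d \<Rightarrow> complex) \<Rightarrow> (complex^'d) \<times> (complex^'d) \<Rightarrow> (complex^'d) \<times> (complex^'d)" where
  "torus_act t p = ((\<chi> k. t k * fst p $ k), (\<chi> k. t k * snd p $ k))"

definition torus :: "('d \<Rightarrow> complex) set" where
  "torus = {t. \<forall>k. cmod (t k) = 1}"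

definition torus_orbit :: "(complex^'d) \<times> (complex^'d) \<Rightarrow> ((complex^'d) \<times> (complex^'d)) set" where
  "torus_orbit p = (\<lambda>t. torus_act t p) ` torus"

end

theory Submission
  imports Defs
begin


lemma linL: "linear (\<lambda>a::real^'n. (\<chi> k. a \<bullet> u k) :: real^'d)"
  by (rule linearI) (auto simp: vec_eq_iff inner_add_left)

lemma exist_real:
  fixes u :: "'d::finite \<Rightarrow> real^'n::finite" and c :: "real^'d"
  assumes h: "\<forall>x\<in>nker u. (\<Sum>k\<in>UNIV. c$k * x$k) = 0"
  shows "\<exists>a. \<forall>k. a \<bullet> u k = c$k"
proof -
  define f where "f = (\<lambda>a::real^'n. (\<chi> k. a \<bullet> u k) :: real^'d)"
  have lf: "linear f" unfolding f_def by (rule linL)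
  obtain y z where y: "y \<in> span (range f)" and z: "\<And>w. w \<in> span (range f) \<Longrightarrow> orthogonal z w"
    and cyz: "c = y + z" by (rule orthogonal_subspace_decomp_exists[of "range f" c]) blast
  have sp: "span (range f) = range f"
    using span_linear_image[OF lf, of UNIV] by simp
  define v where "v = (\<Sum>k\<in>UNIV. z$k *\<^sub>R u k)"
  have "orthogonal z (f v)" using z sp by auto
  then have "z \<bullet> f v = 0" by (simp add: orthogonal_def)
  moreover have "z \<bullet> f v = v \<bullet> v"
  proof -
    have "z \<bullet> f v = (\<Sum>k\<in>UNIV. z$k * (v \<bullet> u k))"
      unfolding f_def by (subst inner_vec_def) simp
    also have "\<dots> = v \<bullet> v" unfolding v_def[symmetric, THEN arg_cong[where f="\<lambda>t. v \<bullet> t"]]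
      by (simp add: v_def inner_sum_right)
    finally show ?thesis .
  qed
  ultimately have "v = 0" by simp
  then have "z \<in> nker u" unfolding nker_def v_def by simp
  with h have "(\<Sum>k\<in>UNIV. c$k * z$k) = 0" by blast
  then have "c \<bullet> z = 0" by (simp add: inner_vec_def)
  moreover have "y \<bullet> z = 0" using z[OF y] by (simp add: orthogonal_def inner_commute)
  ultimately have "z \<bullet> z = 0" using cyz by (simp add: inner_add_left)
  then have "c = y" using cyz by simp
  then obtain a where "c = f a" using y sp by auto
  then show ?thesis unfolding f_def by auto
qed

definition reV :: "complex^'n \<Rightarrow> real^'n" where "reV b = (\<chi> j. Re (b$j))"
definition imV :: "complex^'n \<Rightarrow> real^'n" where "imV b = (\<chi> j. Im (b$j))"

lemma cinner_decomp: "cinner b v = Complex (reV b \<bullet> v) (imV b \<bullet> v)"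
  by (rule complex_eqI) (simp_all add: cinner_def reV_def imV_def inner_vec_def Re_sum Im_sum)

lemma sum_inner_zero:
  fixes u :: "'d::finite \<Rightarrow> real^'n::finite"
  assumes "x \<in> nker u"
  shows "(\<Sum>k\<in>UNIV. (a \<bullet> u k) * x$k) = 0"
proof -
  have "(\<Sum>k\<in>UNIV. (a \<bullet> u k) * x$k) = a \<bullet> (\<Sum>k\<in>UNIV. x$k *\<^sub>R u k)"
    by (simp add: inner_sum_right mult.commute)
  also have "\<dots> = 0" using assms by (simp add: nker_def)
  finally show ?thesis .
qed

lemma exist_complex:
  fixes u :: "'d::finite \<Rightarrow> real^'n::finite" and c :: "'d \<Rightarrow> complex"
  assumes h: "\<forall>x\<in>nker u. (\<Sum>k\<in>UNIV. c k * complex_of_real (x$k)) = 0"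
  shows "\<exists>b. \<forall>k. cinner b (u k) = c k"
proof -
  have "\<forall>x\<in>nker u. (\<Sum>k\<in>UNIV. (\<chi> k. Re (c k))$k * x$k) = 0"
  proof
    fix x assume "x \<in> nker u"
    then have "Re (\<Sum>k\<in>UNIV. c k * complex_of_real (x$k)) = 0" using h by simp
    then show "(\<Sum>k\<in>UNIV. (\<chi> k. Re (c k))$k * x$k) = 0" by (simp add: Re_sum)
  qed
  from exist_real[OF this] obtain a1 where a1: "\<forall>k. a1 \<bullet> u k = Re (c k)" by auto
  have "\<forall>x\<in>nker u. (\<Sum>k\<in>UNIV. (\<chi> k. Im (c k))$k * x$k) = 0"
  proof
    fix x assume "x \<in> nker u"
    then have "Im (\<Sum>k\<in>UNIV. c k * complex_of_real (x$k)) = 0" using h by simp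
    then show "(\<Sum>k\<in>UNIV. (\<chi> k. Im (c k))$k * x$k) = 0" by (simp add: Im_sum)
  qed
  from exist_real[OF this] obtain a2 where a2: "\<forall>k. a2 \<bullet> u k = Im (c k)" by auto
  define b where "b = (\<chi> j. Complex (a1$j) (a2$j))"
  have "reV b = a1" "imV b = a2" by (simp_all add: b_def reV_def imV_def vec_eq_iff)
  then have "\<forall>k. cinner b (u k) = c k" using a1 a2 by (simp add: cinner_decomp complex_eq_iff)
  then show ?thesis by blast
qed

lemma uniq_real:
  fixes u :: "'d::finite \<Rightarrow> real^'n::finite"
  assumes sp: "span (range u) = UNIV" and h: "\<forall>k. a \<bullet> u k = a' \<bullet> u k"
  shows "a = a'"
proof -
  have "orthogonal (a - a') y" for y
  proof (rule orthogonal_to_span)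
    show "y \<in> span (range u)" using sp by simp
    show "\<And>y. y \<in> range u \<Longrightarrow> orthogonal (a - a') y"
      using h by (auto simp: orthogonal_def inner_diff_left)
  qed
  then have "orthogonal (a - a') (a - a')" .
  then show ?thesis by (simp add: orthogonal_def)
qed

lemma uniq_complex:
  fixes u :: "'d::finite \<Rightarrow> real^'n::finite"
  assumes sp: "span (range u) = UNIV" and h: "\<forall>k. cinner b (u k) = cinner b' (u k)"
  shows "b = b'"
proof -
  have "reV b = reV b'" by (rule uniq_real[OF sp]) (use h in \<open>simp add: cinner_decomp\<close>)
  moreover have "imV b = imV b'" by (rule uniq_real[OF sp]) (use h in \<open>simp add: cinner_decomp\<close>)
  ultimately show ?thesis by (simp add: reV_def imV_def vec_eq_iff complex_eq_iff)
qed

lemma level_iff: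
  fixes u :: "'d::finite \<Rightarrow> real^'n::finite"
  shows "p \<in> level_set u l1 l2 l3 \<longleftrightarrow>
    (\<exists>a. \<forall>k. a \<bullet> u k = muI_coeff l1 (fst p) (snd p) k) \<and>
    (\<exists>b. \<forall>k. cinner b (u k) = muC_coeff l2 l3 (fst p) (snd p) k)"
proof
  assume "p \<in> level_set u l1 l2 l3"
  then have h1: "\<forall>x\<in>nker u. (\<Sum>k\<in>UNIV. muI_coeff l1 (fst p) (snd p) k * x$k) = 0"
    and h2: "\<forall>x\<in>nker u. (\<Sum>k\<in>UNIV. muC_coeff l2 l3 (fst p) (snd p) k * complex_of_real (x$k)) = 0"
    by (auto simp: level_set_def split: prod.splits)
  have "\<exists>a. \<forall>k. a \<bullet> u k = (\<chi> k. muI_coeff l1 (fst p) (snd p) k)$k"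
    by (rule exist_real) (use h1 in simp)
  then show "(\<exists>a. \<forall>k. a \<bullet> u k = muI_coeff l1 (fst p) (snd p) k) \<and>
    (\<exists>b. \<forall>k. cinner b (u k) = muC_coeff l2 l3 (fst p) (snd p) k)"
    using exist_complex[OF h2] by simp
next
  assume "(\<exists>a. \<forall>k. a \<bullet> u k = muI_coeff l1 (fst p) (snd p) k) \<and>
    (\<exists>b. \<forall>k. cinner b (u k) = muC_coeff l2 l3 (fst p) (snd p) k)"
  then obtain a b where a: "\<forall>k. a \<bullet> u k = muI_coeff l1 (fst p) (snd p) k"
    and b: "\<forall>k. cinner b (u k) = muC_coeff l2 l3 (fst p) (snd p) k" by blast
  have "(\<Sum>k\<in>UNIV. muI_coeff l1 (fst p) (snd p) k * x$k) = 0" if "x \<in> nker u" for x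
    using sum_inner_zero[OF that, of a] a by simp
  moreover have "(\<Sum>k\<in>UNIV. muC_coeff l2 l3 (fst p) (snd p) k * complex_of_real (x$k)) = 0"
    if "x \<in> nker u" for x
  proof -
    have "(\<Sum>k\<in>UNIV. muC_coeff l2 l3 (fst p) (snd p) k * complex_of_real (x$k))
      = (\<Sum>k\<in>UNIV. cinner b (u k) * complex_of_real (x$k))" using b by simp
    also have "\<dots> = Complex (\<Sum>k\<in>UNIV. (reV b \<bullet> u k) * x$k) (\<Sum>k\<in>UNIV. (imV b \<bullet> u k) * x$k)"
      by (rule complex_eqI) (simp_all add: cinner_decomp Re_sum Im_sum)
    also have "\<dots> = 0" using sum_inner_zero[OF that] by (simp add: complex_eq_iff)
    finally show ?thesis .
  qed
  ultimately show "p \<in> level_set u l1 l2 l3"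
    by (cases p) (auto simp: level_set_def)
qed

lemma phi_eq:
  fixes u :: "'d::finite \<Rightarrow> real^'n::finite"
  assumes sp: "span (range u) = UNIV"
    and a: "\<forall>k. a \<bullet> u k = muI_coeff l1 (fst p) (snd p) k"
    and b: "\<forall>k. cinner b (u k) = muC_coeff l2 l3 (fst p) (snd p) k"
  shows "phi u l1 l2 l3 p = (a, b)"
  unfolding phi_def
proof (rule the_equality)
  show "case (a, b) of (a, b) \<Rightarrow> (\<forall>k. a \<bullet> u k = muI_coeff l1 (fst p) (snd p) k) \<and>
      (\<forall>k. cinner b (u k) = muC_coeff l2 l3 (fst p) (snd p) k)" using a b by simp
  fix x assume "case x of (a, b) \<Rightarrow> (\<forall>k. a \<bullet> u k = muI_coeff l1 (fst p) (snd p) k) \<and>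
      (\<forall>k. cinner b (u k) = muC_coeff l2 l3 (fst p) (snd p) k)"
  then show "x = (a, b)"
    using a b by (cases x) (auto intro!: uniq_real[OF sp] uniq_complex[OF sp])
qed



lemma orbit_k:
  fixes z w z' w' :: complex
  assumes m1: "cmod z = cmod z'" and m2: "cmod w = cmod w'" and e: "z * cnj w = z' * cnj w'"
  shows "\<exists>t. cmod t = 1 \<and> t * z = z' \<and> t * w = w'"
proof (cases "z = 0")
  case False
  define t where "t = z' / z"
  have "cmod z \<noteq> 0" using False by simp
  then have t1: "cmod t = 1" using m1 by (simp add: t_def norm_divide)
  have tz: "t * z = z'" using False by (simp add: t_def)
  have "t * w = w'"
  proof (cases "w = 0")
    case True then show ?thesis using m2 by simp
  next
    case wn: False
    have "z * cnj w = t * z * cnj w'" using e tz by simp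
    then have "cnj w = t * cnj w'" using False by simp
    then have "w = cnj t * w'" by (metis complex_cnj_cnj complex_cnj_mult)
    then have "t * w = (t * cnj t) * w'" by simp
    also have "t * cnj t = 1" using t1 complex_norm_square[of t] by simp
    finally show ?thesis by simp
  qed
  then show ?thesis using t1 tz by blast
next
  case True
  then have z': "z' = 0" using m1 by simp
  show ?thesis
  proof (cases "w = 0")
    case True then show ?thesis using m2 \<open>z = 0\<close> z' by (intro exI[of _ 1]) simp
  next
    case False
    then have "cmod w \<noteq> 0" by simp
    then show ?thesis using m2 \<open>z = 0\<close> z' False
      by (intro exI[of _ "w' / w"]) (simp add: norm_divide)
  qed
qed

definition Sk :: "real \<Rightarrow> real \<Rightarrow> (real \<times> real) set" where
  "Sk A \<beta> = {(r, s). r \<ge> 0 \<and> s \<ge> 0 \<and> r\<^sup>2/2 + s\<^sup>2/2 = A \<and> r * s = \<beta>}"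

lemma Sk_eq:
  assumes b0: "\<beta> \<ge> 0" and ab: "A \<ge> \<beta>"
  defines "\<sigma> \<equiv> sqrt (2*(A+\<beta>))" and "\<delta> \<equiv> sqrt (2*(A-\<beta>))"
  shows "Sk A \<beta> = {((\<sigma>+\<delta>)/2, (\<sigma>-\<delta>)/2), ((\<sigma>-\<delta>)/2, (\<sigma>+\<delta>)/2)}"
proof -
  have s0: "\<sigma> \<ge> 0" "\<delta> \<ge> 0" "\<delta> \<le> \<sigma>" using b0 ab by (auto simp: \<sigma>_def \<delta>_def)
  have s2: "\<sigma>\<^sup>2 = 2*(A+\<beta>)" "\<delta>\<^sup>2 = 2*(A-\<beta>)" using b0 ab by (auto simp: \<sigma>_def \<delta>_def)
  show ?thesis
  proof (intro equalityI subsetI)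
    fix p assume "p \<in> Sk A \<beta>"
    then obtain r s where p: "p = (r, s)" and r: "r \<ge> 0" "s \<ge> 0" "r\<^sup>2/2 + s\<^sup>2/2 = A" "r * s = \<beta>"
      by (auto simp: Sk_def)
    have "(r+s)\<^sup>2 = 2*(A+\<beta>)" using r by (simp add: power2_eq_square algebra_simps)
    then have rs: "r + s = \<sigma>" unfolding \<sigma>_def using r by (metis add_nonneg_nonneg real_sqrt_abs abs_of_nonneg)
    have "(r-s)\<^sup>2 = 2*(A-\<beta>)" using r by (simp add: power2_eq_square algebra_simps)
    then have "\<bar>r - s\<bar> = \<delta>" unfolding \<delta>_def by (metis real_sqrt_abs)
    then have "r - s = \<delta> \<or> r - s = -\<delta>" by linarith
    then show "p \<in> {((\<sigma>+\<delta>)/2, (\<sigma>-\<delta>)/2), ((\<sigma>-\<delta>)/2, (\<sigma>+\<delta>)/2)}"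
      using rs p by auto
  next
    fix p assume "p \<in> {((\<sigma>+\<delta>)/2, (\<sigma>-\<delta>)/2), ((\<sigma>-\<delta>)/2, (\<sigma>+\<delta>)/2)}"
    moreover have "((\<sigma>+\<delta>)/2)\<^sup>2/2 + ((\<sigma>-\<delta>)/2)\<^sup>2/2 = A"
      using s2 by (simp add: power2_eq_square field_simps)
    moreover have "((\<sigma>+\<delta>)/2) * ((\<sigma>-\<delta>)/2) = \<beta>"
      using s2 by (simp add: power2_eq_square field_simps)
    ultimately show "p \<in> Sk A \<beta>" using s0 by (auto simp: Sk_def add.commute mult.commute)
  qed
qed

lemma card_Sk:
  assumes b0: "\<beta> \<ge> 0" and ab: "A \<ge> \<beta>"
  shows "card (Sk A \<beta>) = (if A > \<beta> then 2 else 1)" and "finite (Sk A \<beta>)"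
proof -
  have "sqrt (2*(A-\<beta>)) = 0 \<longleftrightarrow> A = \<beta>" by simp
  then show "card (Sk A \<beta>) = (if A > \<beta> then 2 else 1)"
    unfolding Sk_eq[OF assms] using ab by (auto simp: card_insert_if)
  show "finite (Sk A \<beta>)" unfolding Sk_eq[OF assms] by simp
qed

lemma realize_k:
  fixes B :: complex
  assumes "(r, s) \<in> Sk A (cmod B)"
  shows "\<exists>z w. cmod z = r \<and> cmod w = s \<and> \<i> * z * cnj w = B"
proof -
  from assms have r: "r \<ge> 0" "s \<ge> 0" "r * s = cmod B" by (auto simp: Sk_def)
  define e where "e = (if B = 0 then 1 else - \<i> * sgn B)"
  have e1: "cmod e = 1" by (simp add: e_def norm_mult norm_sgn)
  have "\<i> * (of_real r * e) * cnj (of_real s) = B"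
  proof (cases "B = 0")
    case True
    then have "r * s = 0" using r by simp
    then have "complex_of_real r * complex_of_real s = 0" by (metis of_real_mult of_real_0)
    then show ?thesis using True by (simp add: e_def)
  next
    case False
    have "\<i> * (of_real r * e) * cnj (of_real s) = of_real (r * s) * sgn B"
      using False by (simp add: e_def algebra_simps)
    also have "\<dots> = B" using r False by (simp add: sgn_eq)
    finally show ?thesis .
  qed
  moreover have "cmod (of_real r * e) = r" using e1 r by (simp add: norm_mult)
  moreover have "cmod (complex_of_real s) = s" using r by simp
  ultimately show ?thesis by blast
qed

lemma in_Sk:
  fixes z w B :: complex
  assumes "cmod z ^ 2 / 2 + cmod w ^ 2 / 2 = A" and "\<i> * z * cnj w = B"
  shows "(cmod z, cmod w) \<in> Sk A (cmod B)"
proof -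
  have "cmod B = cmod z * cmod w" using assms(2)[symmetric] by (simp add: norm_mult)
  then show ?thesis using assms(1) by (simp add: Sk_def)
qed



lemma fib_iff:
  fixes u :: "'d::finite \<Rightarrow> real^'n::finite"
  assumes sp: "span (range u) = UNIV"
  shows "(p \<in> level_set u l1 l2 l3 \<and> phi u l1 l2 l3 p = (a, b)) \<longleftrightarrow>
    (\<forall>k. cmod (fst p $ k) ^ 2 / 2 + cmod (snd p $ k) ^ 2 / 2 = a_comp u l1 a k) \<and>
    (\<forall>k. \<i> * fst p $ k * cnj (snd p $ k) = b_comp u l2 l3 b k)"
proof -
  have e1: "(\<forall>k. a \<bullet> u k = muI_coeff l1 (fst p) (snd p) k) \<longleftrightarrow>
    (\<forall>k. cmod (fst p $ k) ^ 2 / 2 + cmod (snd p $ k) ^ 2 / 2 = a_comp u l1 a k)"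
    by (auto simp: muI_coeff_def a_comp_def)
  have e2: "(\<forall>k. cinner b (u k) = muC_coeff l2 l3 (fst p) (snd p) k) \<longleftrightarrow>
    (\<forall>k. \<i> * fst p $ k * cnj (snd p $ k) = b_comp u l2 l3 b k)"
    by (auto simp: muC_coeff_def b_comp_def)
  show ?thesis
  proof
    assume h: "p \<in> level_set u l1 l2 l3 \<and> phi u l1 l2 l3 p = (a, b)"
    then obtain a' b' where a': "\<forall>k. a' \<bullet> u k = muI_coeff l1 (fst p) (snd p) k"
      and b': "\<forall>k. cinner b' (u k) = muC_coeff l2 l3 (fst p) (snd p) k"
      using level_iff by blast
    have "(a', b') = (a, b)" using phi_eq[OF sp a' b'] h by simp
    then show "(\<forall>k. cmod (fst p $ k) ^ 2 / 2 + cmod (snd p $ k) ^ 2 / 2 = a_comp u l1 a k) \<and>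
    (\<forall>k. \<i> * fst p $ k * cnj (snd p $ k) = b_comp u l2 l3 b k)" using a' b' e1 e2 by auto
  next
    assume "(\<forall>k. cmod (fst p $ k) ^ 2 / 2 + cmod (snd p $ k) ^ 2 / 2 = a_comp u l1 a k) \<and>
    (\<forall>k. \<i> * fst p $ k * cnj (snd p $ k) = b_comp u l2 l3 b k)"
    then have a': "\<forall>k. a \<bullet> u k = muI_coeff l1 (fst p) (snd p) k"
      and b': "\<forall>k. cinner b (u k) = muC_coeff l2 l3 (fst p) (snd p) k" using e1 e2 by auto
    show "p \<in> level_set u l1 l2 l3 \<and> phi u l1 l2 l3 p = (a, b)"
      using level_iff a' b' phi_eq[OF sp a' b'] by blast
  qed
qed

lemma Sk_ge: "(r, s) \<in> Sk A \<beta> \<Longrightarrow> \<beta> \<le> A"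
proof -
  assume "(r, s) \<in> Sk A \<beta>"
  then have "r\<^sup>2/2 + s\<^sup>2/2 = A" "r * s = \<beta>" by (auto simp: Sk_def)
  moreover have "0 \<le> (r - s)\<^sup>2" by simp
  ultimately show ?thesis by (simp add: power2_eq_square algebra_simps)
qed

lemma torus_act_comp: "torus_act s (torus_act t p) = torus_act (\<lambda>k. s k * t k) p"
  by (simp add: torus_act_def vec_eq_iff)

lemma torus_orbit_act:
  assumes "t \<in> torus"
  shows "torus_orbit (torus_act t p) = torus_orbit p"
proof
  show "torus_orbit (torus_act t p) \<subseteq> torus_orbit p"
    using assms by (auto simp: torus_orbit_def torus_act_comp torus_def norm_mult)
  show "torus_orbit p \<subseteq> torus_orbit (torus_act t p)"
  proof
    fix x assume "x \<in> torus_orbit p"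
    then obtain s where s: "s \<in> torus" "x = torus_act s p" by (auto simp: torus_orbit_def)
    have tn: "t k \<noteq> 0" for k using assms by (auto simp: torus_def dest: spec[of _ k])
    have "x = torus_act (\<lambda>k. s k / t k) (torus_act t p)"
      using s tn by (simp add: torus_act_comp)
    moreover have "(\<lambda>k. s k / t k) \<in> torus" using s assms by (simp add: torus_def norm_divide)
    ultimately show "x \<in> torus_orbit (torus_act t p)" by (auto simp: torus_orbit_def)
  qed
qed

lemma self_in_orbit: "p \<in> torus_orbit p"
proof -
  have "torus_act (\<lambda>k. 1) p = p" by (simp add: torus_act_def vec_eq_iff)
  moreover have "(\<lambda>k. 1) \<in> torus" by (simp add: torus_def)
  ultimately show ?thesis unfolding torus_orbit_def by (metis image_eqI)
qed

definition rho :: "(complex^'d) \<times> (complex^'d) \<Rightarrow> 'd \<Rightarrow> real \<times> real" where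
  "rho p = (\<lambda>k. (cmod (fst p $ k), cmod (snd p $ k)))"

lemma rho_act: "t \<in> torus \<Longrightarrow> rho (torus_act t p) = rho p"
  by (auto simp: rho_def torus_act_def torus_def norm_mult)

lemma rho_orbit: "x \<in> torus_orbit p \<Longrightarrow> rho x = rho p"
  by (auto simp: torus_orbit_def rho_act)

lemma muI_act: "t \<in> torus \<Longrightarrow> muI_coeff l1 (fst (torus_act t p)) (snd (torus_act t p)) = muI_coeff l1 (fst p) (snd p)"
  by (auto simp: muI_coeff_def torus_act_def torus_def norm_mult)

lemma muC_act: "t \<in> torus \<Longrightarrow> muC_coeff l2 l3 (fst (torus_act t p)) (snd (torus_act t p)) = muC_coeff l2 l3 (fst p) (snd p)"
proof -
  assume "t \<in> torus"
  then have "t k * cnj (t k) = 1" for k using complex_norm_square[of "t k"] by (simp add: torus_def)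
  then show ?thesis
    by (auto simp: muC_coeff_def torus_act_def fun_eq_iff algebra_simps)
qed



lemma orbit_eq_rho:
  fixes u :: "'d::finite \<Rightarrow> real^'n::finite"
  assumes sp: "span (range u) = UNIV"
    and p: "p \<in> level_set u l1 l2 l3 \<and> phi u l1 l2 l3 p = (a, b)"
    and q: "q \<in> level_set u l1 l2 l3 \<and> phi u l1 l2 l3 q = (a, b)"
    and r: "rho p = rho q"
  shows "torus_orbit p = torus_orbit q"
proof -
  have "\<forall>k. \<exists>t. cmod t = 1 \<and> t * fst p $ k = fst q $ k \<and> t * snd p $ k = snd q $ k"
  proof
    fix k
    have "fst p $ k * cnj (snd p $ k) = fst q $ k * cnj (snd q $ k)"
    proof -
      have "\<i> * (fst p $ k * cnj (snd p $ k)) = \<i> * (fst q $ k * cnj (snd q $ k))"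
        using fib_iff[OF sp, where p=p and a=a and b=b] fib_iff[OF sp, where p=q and a=a and b=b] p q by (simp add: mult.assoc)
      then show ?thesis by simp
    qed
    moreover have "cmod (fst p $ k) = cmod (fst q $ k)" "cmod (snd p $ k) = cmod (snd q $ k)"
      using r by (auto simp: rho_def fun_eq_iff)
    ultimately show "\<exists>t. cmod t = 1 \<and> t * fst p $ k = fst q $ k \<and> t * snd p $ k = snd q $ k"
      using orbit_k by blast
  qed
  then obtain t where t: "\<forall>k. cmod (t k) = 1 \<and> t k * fst p $ k = fst q $ k \<and> t k * snd p $ k = snd q $ k"
    by metis
  then have "t \<in> torus" "q = torus_act t p"
    by (auto simp: torus_def torus_act_def vec_eq_iff prod_eq_iff)
  then show ?thesis using torus_orbit_act by metis
qed

lemma realize_all: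
  fixes A :: "'d::finite \<Rightarrow> real" and B :: "'d \<Rightarrow> complex"
  assumes "\<forall>k. g k \<in> Sk (A k) (cmod (B k))"
  shows "\<exists>p. rho p = g \<and> (\<forall>k. cmod (fst p $ k) ^ 2 / 2 + cmod (snd p $ k) ^ 2 / 2 = A k) \<and>
    (\<forall>k. \<i> * fst p $ k * cnj (snd p $ k) = B k)"
proof -
  have "\<forall>k. \<exists>zw. cmod (fst zw) = fst (g k) \<and> cmod (snd zw) = snd (g k) \<and> \<i> * fst zw * cnj (snd zw) = B k"
  proof
    fix k
    obtain r s where rs: "g k = (r, s)" by (cases "g k")
    then obtain z w where "cmod z = r \<and> cmod w = s \<and> \<i> * z * cnj w = B k"
      using realize_k[of r s "A k" "B k"] assms by metis
    then show "\<exists>zw. cmod (fst zw) = fst (g k) \<and> cmod (snd zw) = snd (g k) \<and> \<i> * fst zw * cnj (snd zw) = B k"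
      using rs by (intro exI[of _ "(z, w)"]) simp
  qed
  then obtain f where f: "\<forall>k. cmod (fst (f k)) = fst (g k) \<and> cmod (snd (f k)) = snd (g k) \<and> \<i> * fst (f k) * cnj (snd (f k)) = B k"
    by metis
  define p where "p = ((\<chi> k. fst (f k)), (\<chi> k. snd (f k)))"
  have "rho p = g" using f by (auto simp: rho_def p_def fun_eq_iff prod_eq_iff)
  moreover have "\<forall>k. cmod (fst p $ k) ^ 2 / 2 + cmod (snd p $ k) ^ 2 / 2 = A k"
    using f assms by (auto simp: p_def Sk_def split: prod.splits)
  moreover have "\<forall>k. \<i> * fst p $ k * cnj (snd p $ k) = B k" using f by (simp add: p_def)
  ultimately show ?thesis by blast
qed

theorem proposition5p1:
  fixes u :: "'d::finite \<Rightarrow> real^'n::finite"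
    and l1 l2 l3 :: "'d \<Rightarrow> real"
  assumes integral: "\<And>k j. u k $ j \<in> \<int>"
    and spanning: "span (range u) = UNIV"
  shows "phi u l1 l2 l3 ` level_set u l1 l2 l3 = Kset u l1 l2 l3 \<and>
    (\<forall>p\<in>level_set u l1 l2 l3. \<forall>t\<in>torus.
        torus_act t p \<in> level_set u l1 l2 l3 \<and>
        phi u l1 l2 l3 (torus_act t p) = phi u l1 l2 l3 p) \<and>
    (\<forall>a b. (a, b) \<in> Kset u l1 l2 l3 \<longrightarrow>
        finite {torus_orbit p | p. p \<in> level_set u l1 l2 l3 \<and> phi u l1 l2 l3 p = (a, b)} \<and>
        card {torus_orbit p | p. p \<in> level_set u l1 l2 l3 \<and> phi u l1 l2 l3 p = (a, b)}
          = 2 ^ card {k. a_comp u l1 a k > cmod (b_comp u l2 l3 b k)})"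
proof (intro conjI allI impI ballI)
  note sp = spanning
  show "phi u l1 l2 l3 ` level_set u l1 l2 l3 = Kset u l1 l2 l3"
  proof (intro equalityI subsetI)
    fix x assume "x \<in> phi u l1 l2 l3 ` level_set u l1 l2 l3"
    then obtain p where p: "p \<in> level_set u l1 l2 l3" "x = phi u l1 l2 l3 p" by auto
    obtain a b where ab: "x = (a, b)" by (cases x)
    have "p \<in> level_set u l1 l2 l3 \<and> phi u l1 l2 l3 p = (a, b)" using p ab by simp
    then have h: "\<forall>k. cmod (fst p $ k) ^ 2 / 2 + cmod (snd p $ k) ^ 2 / 2 = a_comp u l1 a k"
      "\<forall>k. \<i> * fst p $ k * cnj (snd p $ k) = b_comp u l2 l3 b k"
      using fib_iff[OF spanning] by blast+
    have "cmod (b_comp u l2 l3 b k) \<le> a_comp u l1 a k" for k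
      using Sk_ge[OF in_Sk[of "fst p $ k" "snd p $ k"]] h by blast
    then show "x \<in> Kset u l1 l2 l3" using ab by (simp add: Kset_def)
  next
    fix x assume "x \<in> Kset u l1 l2 l3"
    then obtain a b where ab: "x = (a, b)" and K: "\<forall>k. cmod (b_comp u l2 l3 b k) \<le> a_comp u l1 a k"
      by (auto simp: Kset_def)
    have "\<forall>k. \<exists>g. g \<in> Sk (a_comp u l1 a k) (cmod (b_comp u l2 l3 b k))"
    proof
      fix k
      show "\<exists>g. g \<in> Sk (a_comp u l1 a k) (cmod (b_comp u l2 l3 b k))"
      proof -
        have "Sk (a_comp u l1 a k) (cmod (b_comp u l2 l3 b k)) \<noteq> {}"
          by (subst Sk_eq) (use K in auto)
        then show ?thesis by blast
      qed
    qed
    then obtain g where "\<forall>k. g k \<in> Sk (a_comp u l1 a k) (cmod (b_comp u l2 l3 b k))" by metis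
    from realize_all[OF this] obtain p where
      "(\<forall>k. cmod (fst p $ k) ^ 2 / 2 + cmod (snd p $ k) ^ 2 / 2 = a_comp u l1 a k) \<and>
        (\<forall>k. \<i> * fst p $ k * cnj (snd p $ k) = b_comp u l2 l3 b k)" by blast
    then have "p \<in> level_set u l1 l2 l3 \<and> phi u l1 l2 l3 p = (a, b)" using fib_iff[OF spanning] by blast
    then show "x \<in> phi u l1 l2 l3 ` level_set u l1 l2 l3" using ab by force
  qed
next
  fix p and t :: "'d \<Rightarrow> complex" assume p: "p \<in> level_set u l1 l2 l3" and t: "t \<in> torus"
  show "torus_act t p \<in> level_set u l1 l2 l3"
  proof -
    have "torus_act t p \<in> level_set u l1 l2 l3 \<longleftrightarrow> p \<in> level_set u l1 l2 l3"
      by (simp only: level_iff muI_act[OF t] muC_act[OF t])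
    then show ?thesis using p by simp
  qed
  show "phi u l1 l2 l3 (torus_act t p) = phi u l1 l2 l3 p"
    unfolding phi_def using muI_act[OF t] muC_act[OF t] by simp
next
  fix a b assume ab: "(a, b) \<in> Kset u l1 l2 l3"
  then have K: "\<forall>k. cmod (b_comp u l2 l3 b k) \<le> a_comp u l1 a k" by (simp add: Kset_def)
  define F where "F = {p. p \<in> level_set u l1 l2 l3 \<and> phi u l1 l2 l3 p = (a, b)}"
  define S where "S = (\<lambda>k. Sk (a_comp u l1 a k) (cmod (b_comp u l2 l3 b k)))"
  have O: "{torus_orbit p | p. p \<in> level_set u l1 l2 l3 \<and> phi u l1 l2 l3 p = (a, b)} = torus_orbit ` F"
    by (auto simp: F_def)
  have rF: "rho ` F = PiE UNIV S"
  proof (intro equalityI subsetI)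
    fix g assume "g \<in> rho ` F"
    then obtain p where p: "p \<in> F" "g = rho p" by auto
    then have h: "\<forall>k. cmod (fst p $ k) ^ 2 / 2 + cmod (snd p $ k) ^ 2 / 2 = a_comp u l1 a k"
      "\<forall>k. \<i> * fst p $ k * cnj (snd p $ k) = b_comp u l2 l3 b k"
      using fib_iff[OF spanning] F_def by blast+
    then show "g \<in> PiE UNIV S" using p in_Sk by (auto simp: S_def rho_def)
  next
    fix g assume "g \<in> PiE UNIV S"
    then have "\<forall>k. g k \<in> Sk (a_comp u l1 a k) (cmod (b_comp u l2 l3 b k))" by (auto simp: S_def)
    from realize_all[OF this] obtain p where "rho p = g"
      "(\<forall>k. cmod (fst p $ k) ^ 2 / 2 + cmod (snd p $ k) ^ 2 / 2 = a_comp u l1 a k) \<and>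
        (\<forall>k. \<i> * fst p $ k * cnj (snd p $ k) = b_comp u l2 l3 b k)" by blast
    then show "g \<in> rho ` F" using fib_iff[OF spanning] F_def by blast
  qed
  define G where "G = (\<lambda>X :: ((complex^'d) \<times> (complex^'d)) set. rho (SOME p. p \<in> X))"
  have Gp: "G (torus_orbit p) = rho p" for p
    unfolding G_def by (rule rho_orbit, rule someI, rule self_in_orbit)
  have inj: "inj_on G (torus_orbit ` F)"
  proof (rule inj_onI)
    fix X Y assume "X \<in> torus_orbit ` F" "Y \<in> torus_orbit ` F" "G X = G Y"
    then obtain p q where "p \<in> F" "q \<in> F" "X = torus_orbit p" "Y = torus_orbit q" "rho p = rho q"
      using Gp by auto
    then show "X = Y" using orbit_eq_rho[OF spanning] F_def by blast
  qed
  have GO: "G ` (torus_orbit ` F) = rho ` F" using Gp by (auto simp: image_image)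
  have finS: "finite (S k)" "card (S k) = (if a_comp u l1 a k > cmod (b_comp u l2 l3 b k) then 2 else 1)" for k
    using card_Sk[of "cmod (b_comp u l2 l3 b k)" "a_comp u l1 a k"] K by (auto simp: S_def)
  have finR: "finite (rho ` F)" unfolding rF by (rule finite_PiE) (auto simp: finS)
  have cardR: "card (rho ` F) = 2 ^ card {k. a_comp u l1 a k > cmod (b_comp u l2 l3 b k)}"
    unfolding rF by (simp add: card_PiE finS prod.If_cases)
  have "card (torus_orbit ` F) = card (rho ` F)" using card_image[OF inj] GO by simp
  moreover have "finite (torus_orbit ` F)" using finR GO inj by (metis finite_imageD)
  ultimately show "finite {torus_orbit p | p. p \<in> level_set u l1 l2 l3 \<and> phi u l1 l2 l3 p = (a, b)}"
    "card {torus_orbit p | p. p \<in> level_set u l1 l2 l3 \<and> phi u l1 l2 l3 p = (a, b)}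
          = 2 ^ card {k. a_comp u l1 a k > cmod (b_comp u l2 l3 b k)}"
    using O cardR by simp_all
qed

end
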